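(* Let $S:\mathbb{R}^m\times\mathbb{R}^n\to\mathbb{R}^q$ be bilinear with lifted operator $\mathscr{S}$. Let $\mathcal{K}'=\{\lambda xy^T:x\in\{-1,1\}^m,y\in\{-1,1\}^n,\lambda\in\mathbb{R}\}$, $\mathcal{M}=\mathcal{K}'-\mathcal{K}'$, and assume $\mathcal{N}(\mathscr{S},1)\cap\mathcal{M}=\{0\}$. Let $\mathbf{M}=xy^T$ be a random rank one matrix where the components of $x\in\mathbb{R}^m$ and of $y\in\mathbb{R}^n$ are drawn independently from the symmetric Bernoulli distribution. Let $\mathcal{G}(k)=\{Y\in\mathbb{R}^{k\times2}:Y^TY=I\}$ and $\mathcal{D}(k)=\{[y_1,y_2]\in\mathbb{R}^{k\times2}:\max_j\|y_j\|_2\le1\}$. Let $\mathcal{G}_c=\{Y\in\mathcal{G}(m):\mathcal{C}(Y)=\mathcal{C}(X)\text{ for some }X\in\mathcal{N}(\mathscr{S},2)\cap\mathcal{M}\setminus\{0\}\}$ and $\mathcal{G}_r=\{Y\in\mathcal{G}(n):\mathcal{C}(Y)=\mathcal{R}(X)\text{ for some }X\in\mathcal{N}(\mathscr{S},2)\cap\mathcal{M}\setminus\{0\}\}$. Fix $\epsilon$ with $1>\epsilon\ge\epsilon_0>0$, let $p_c\log\Theta(1/\epsilon)$ denote the metric entropy of $\mathcal{G}_c$ with respect to $\epsilon\mathcal{D}(m)$ and $p_r\log\Theta(1/\epsilon)$ that of $\mathcal{G}_r$ with respect to $\epsilon\mathcal{D}(n)$, and let $p=p_c+p_r$. For any constant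 $\delta'\in(0,1-2\epsilon^2)$, set $\delta=1-(\sqrt{1-\delta'}-\sqrt2\epsilon)^2$. Then with probability greater than $1-16\exp\big[p\log\Theta(1/\epsilon)-(m+n)\frac{1-\delta}{4}\big]$, for every $X\in\mathcal{N}(\mathscr{S},2)\cap\mathcal{M}\setminus\{0\}$ either $x\notin\mathcal{C}(X)$ or $y\notin\mathcal{R}(X)$.
   Context: For $j=1,\dots,q$ let $S_j$ be the unique matrix with $(S(x,y))_j=x^TS_jy$; the lifted operator is $(\mathscr{S}(W))_j=\operatorname{tr}(S_j^TW)$. $\mathcal{N}(\mathscr{S},k)=\{X:\operatorname{rank}(X)\le k,\ \mathscr{S}(X)=0\}$; $\mathcal{K}'-\mathcal{K}'=\{X_1-X_2:X_1,X_2\in\mathcal{K}'\}$. $\mathcal{C}(X)$, $\mathcal{R}(X)$ are column and row spaces. Symmetric Bernoulli: $\pm1$ each with probability $1/2$. The metric entropy of a set with respect to $\epsilon\mathcal{D}$ is the log of the minimum number of translates of $\epsilon\mathcal{D}$ covering it; the paper writes these as $p_c\log\Theta(1/\epsilon)$, $p_r\log\Theta(1/\epsilon)$, and in the bound $\exp[p\log\Theta(1/\epsilon)]$ denotes the product of the two covering numbers. *)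

theory Defs
  imports "HOL-Analysis.Analysis" "HOL-Probability.Probability"
begin

text \<open>Matrices in R^{m x n} are rendered as real^'n^'m (rows indexed by 'm).\<close>

text \<open>The matrix S_j with (S(x,y))_j = x^T S_j y, i.e. (S_j)_{ik} = (S(e_i,e_k))_j.\<close>
definition Smat :: "(real^'m \<Rightarrow> real^'n \<Rightarrow> real^'q) \<Rightarrow> 'q \<Rightarrow> real^'n^'m" where
  "Smat S j = (\<chi> i k. (S (axis i 1) (axis k 1)) $ j)"

text \<open>Lifted operator: (liftS S W)_j = tr(S_j^T W).\<close>
definition liftS :: "(real^'m \<Rightarrow> real^'n \<Rightarrow> real^'q) \<Rightarrow> real^'n^'m \<Rightarrow> real^'q" where
  "liftS S W = (\<chi> j. trace (transpose (Smat S j) ** W))"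

text \<open>N(S,k) = {X : rank X <= k, S(X) = 0}.\<close>
definition Nset :: "(real^'m \<Rightarrow> real^'n \<Rightarrow> real^'q) \<Rightarrow> nat \<Rightarrow> (real^'n^'m) set" where
  "Nset S k = {X. rank X \<le> k \<and> liftS S X = 0}"

definition outer :: "real^'m \<Rightarrow> real^'n \<Rightarrow> real^'n^'m" where
  "outer x y = (\<chi> i j. x $ i * y $ j)"

definition signvecs :: "(real^'k) set" where
  "signvecs = {x. \<forall>i. x $ i = 1 \<or> x $ i = -1}"

text \<open>K' = {lambda x y^T : x, y sign vectors, lambda real}.\<close>
definition Kprime :: "(real^'n^'m) set" where
  "Kprime = {c *\<^sub>R outer x y | c x y. x \<in> signvecs \<and> y \<in> signvecs}"

text \<open>M = K' - K'.\<close>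
definition Mset :: "(real^'n^'m) set" where
  "Mset = {X1 - X2 | X1 X2. X1 \<in> Kprime \<and> X2 \<in> Kprime}"

text \<open>Column space and row space.\<close>
definition colsp :: "real^'n^'m \<Rightarrow> (real^'m) set" where
  "colsp X = span (columns X)"

definition rowsp :: "real^'n^'m \<Rightarrow> (real^'n) set" where
  "rowsp X = span (rows X)"

text \<open>G(k) = {Y in R^{k x 2} : Y^T Y = I}.\<close>
definition Gset :: "(real^2^'k) set" where
  "Gset = {Y. transpose Y ** Y = mat 1}"

text \<open>D(k) = {[y1,y2] in R^{k x 2} : max_j ||y_j|| <= 1}.\<close>
definition Dset :: "(real^2^'k) set" where
  "Dset = {Y. \<forall>j. norm (column j Y) \<le> 1}"

definition Gc :: "(real^'m \<Rightarrow> real^'n \<Rightarrow> real^'q) \<Rightarrow> (real^2^'m) set" where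
  "Gc S = {Y \<in> Gset. \<exists>X \<in> Nset S 2 \<inter> Mset - {0}. colsp Y = colsp X}"

definition Gr :: "(real^'m \<Rightarrow> real^'n \<Rightarrow> real^'q) \<Rightarrow> (real^2^'n) set" where
  "Gr S = {Y \<in> Gset. \<exists>X \<in> Nset S 2 \<inter> Mset - {0}. colsp Y = rowsp X}"

text \<open>Covering number: minimum number of translates of D covering A
  (the metric entropy is its logarithm).\<close>
definition covnum :: "'a::ab_group_add set \<Rightarrow> 'a set \<Rightarrow> nat" where
  "covnum A D = (LEAST N. \<exists>F. finite F \<and> card F = N \<and> A \<subseteq> (\<Union>c\<in>F. (\<lambda>d. c + d) ` D))"

end

theory Submission
  imports Defs "HOL-Probability.Hoeffding"
begin


lemma signvecs_image: "(signvecs :: (real^'k) set) = vec_lambda ` (PiE UNIV (\<lambda>_::'k. {-1,1::real}))"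
proof (rule set_eqI, rule iffI)
  fix x :: "real^'k" assume "x \<in> signvecs"
  then have "(\<lambda>i. x $ i) \<in> PiE UNIV (\<lambda>_. {-1,1})" by (auto simp: signvecs_def)
  then show "x \<in> vec_lambda ` (PiE UNIV (\<lambda>_::'k. {-1,1::real}))"
    by (metis image_eqI vec_nth_inverse)
next
  fix x :: "real^'k" assume "x \<in> vec_lambda ` (PiE UNIV (\<lambda>_::'k. {-1,1::real}))"
  then show "x \<in> signvecs" by (auto simp: signvecs_def PiE_iff)
qed

lemma sum_signvecs:
  fixes f :: "'k::finite \<Rightarrow> real \<Rightarrow> real"
  shows "(\<Sum>x\<in>(signvecs :: (real^'k) set). \<Prod>i\<in>UNIV. f i (x $ i)) = (\<Prod>i\<in>UNIV. f i 1 + f i (-1))"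
proof -
  have inj: "inj_on vec_lambda (PiE UNIV (\<lambda>_::'k. {-1,1::real}))"
    by (intro inj_onI) (metis vec_lambda_beta ext)
  have "(\<Sum>x\<in>(signvecs :: (real^'k) set). \<Prod>i\<in>UNIV. f i (x $ i))
      = (\<Sum>g\<in>PiE UNIV (\<lambda>_::'k. {-1,1::real}). \<Prod>i\<in>UNIV. f i (g i))"
    unfolding signvecs_image by (subst sum.reindex[OF inj]) simp
  also have "\<dots> = (\<Prod>i\<in>UNIV. \<Sum>y\<in>{-1,1}. f i y)"
    by (rule prod_sum_PiE[symmetric]) auto
  also have "\<dots> = (\<Prod>i\<in>UNIV. f i 1 + f i (-1))" by (simp add: add.commute)
  finally show ?thesis .
qed

lemma finite_signvecs: "finite (signvecs :: (real^'k) set)"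
  unfolding signvecs_image by (intro finite_imageI finite_PiE) auto

lemma card_signvecs: "card (signvecs :: (real^'k) set) = 2 ^ CARD('k)"
proof -
  have "real (card (signvecs :: (real^'k) set)) = (\<Sum>x\<in>(signvecs :: (real^'k) set). \<Prod>i\<in>UNIV. (\<lambda>i y. 1::real) i (x $ i))"
    by simp
  also have "\<dots> = 2 ^ CARD('k)" by (subst sum_signvecs) simp
  finally show ?thesis by (metis of_nat_eq_of_nat_power_cancel_iff of_nat_numeral)
qed

lemma cosh_le: "exp (a::real) + exp (-a) \<le> 2 * exp (a^2/2)"
proof -
  have main: "exp b + exp (-b) \<le> 2 * exp (b^2/2)" if "b \<ge> 0" for b :: real
  proof -
    have "-(2*b) * (1/2) + ln (1 + (1/2) * (exp (2*b) - 1)) \<le> (2*b)^2/8"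
      using Hoeffdings_lemma_aux[of "2*b" "1/2"] that by simp
    then have "ln (1 + (1/2) * (exp (2*b) - 1)) \<le> b + b^2/2" by (simp add: power2_eq_square)
    moreover have pos: "1 + (1/2) * (exp (2*b) - 1) > 0" by (simp add: field_simps add_pos_pos)
    ultimately have "1 + (1/2) * (exp (2*b) - 1) \<le> exp (b + b^2/2)"
      by (metis exp_le_cancel_iff exp_ln)
    then have "(exp (2*b) + 1) / 2 \<le> exp b * exp (b^2/2)" by (simp add: exp_add algebra_simps)
    note A = this
    have B: "exp (2*b) = exp b * exp b" by (simp add: exp_add[symmetric])
    have h: "(exp b * exp b + 1) / 2 \<le> exp b * exp (b^2/2)" using A unfolding B .
    have ineq: "1 + exp b * exp b \<le> exp b * (2 * exp (b^2/2))" using h by (simp add: divide_le_eq mult_ac)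
    have e: "exp b > 0" by simp
    have "exp b + exp (-b) = (1 + exp b * exp b) / exp b" using e by (simp add: exp_minus field_simps)
    also have "\<dots> \<le> (exp b * (2*exp(b^2/2))) / exp b" by (rule divide_right_mono[OF ineq]) (use e in simp)
    also have "\<dots> = 2*exp(b^2/2)" using e by simp
    finally show ?thesis .
  qed
  show ?thesis
  proof (cases "a \<ge> 0")
    case True then show ?thesis using main by blast
  next
    case False then show ?thesis using main[of "-a"] by simp
  qed
qed

lemma hoeff1:
  fixes u :: "real^'k"
  assumes nu: "norm u = 1" and l: "l \<ge> 0"
  shows "real (card {x\<in>(signvecs :: (real^'k) set). inner u x \<ge> l}) \<le> 2 ^ CARD('k) * exp (- (l^2) / 2)"
proof -
  let ?A = "{x\<in>(signvecs :: (real^'k) set). inner u x \<ge> l}"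
  have fA: "finite ?A" using finite_signvecs by auto
  have uu: "(\<Sum>i\<in>UNIV. u$i * u$i) = 1"
    using nu by (metis inner_vec_def inner_real_def norm_eq_1)
  have "real (card ?A) = (\<Sum>x\<in>?A. 1)" by simp
  also have "\<dots> \<le> (\<Sum>x\<in>?A. exp (l * inner u x - l^2))"
  proof (rule sum_mono)
    fix x assume "x \<in> ?A"
    then have "l * inner u x - l^2 \<ge> 0" using l by (simp add: power2_eq_square mult_left_mono)
    then show "1 \<le> exp (l * inner u x - l^2)" by simp
  qed
  also have "\<dots> \<le> (\<Sum>x\<in>(signvecs :: (real^'k) set). exp (l * inner u x - l^2))"
    by (rule sum_mono2[OF finite_signvecs]) auto
  also have "\<dots> = (\<Sum>x\<in>(signvecs :: (real^'k) set). exp (- (l^2)) * (\<Prod>i\<in>UNIV. exp (l * u$i * x$i)))"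
  proof (rule sum.cong[OF refl])
    fix x :: "real^'k"
    have "exp (l * inner u x - l^2) = exp (- (l^2)) * exp (\<Sum>i\<in>UNIV. l * u$i * x$i)"
      by (simp add: inner_vec_def sum_distrib_left mult.assoc exp_add[symmetric])
    then show "exp (l * inner u x - l^2) = exp (- (l^2)) * (\<Prod>i\<in>UNIV. exp (l * u$i * x$i))"
      by (simp add: exp_sum)
  qed
  also have "\<dots> = exp (- (l^2)) * (\<Sum>x\<in>(signvecs :: (real^'k) set). \<Prod>i\<in>UNIV. (\<lambda>i y. exp (l * u$i * y)) i (x$i))"
    by (simp add: sum_distrib_left)
  also have "\<dots> = exp (- (l^2)) * (\<Prod>i\<in>UNIV. exp (l * u$i) + exp (-(l * u$i)))"
    by (subst sum_signvecs) simp
  also have "\<dots> \<le> exp (- (l^2)) * (\<Prod>i\<in>UNIV. 2 * exp ((l * u$i)^2/2))"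
    by (intro mult_left_mono prod_mono conjI cosh_le) (auto intro: add_nonneg_nonneg)
  also have "\<dots> = exp (- (l^2)) * (2 ^ CARD('k) * exp (\<Sum>i\<in>UNIV. (l * u$i)^2/2))"
    by (simp add: prod.distrib exp_sum)
  also have "(\<Sum>i\<in>UNIV. (l * u$i)^2/2) = l^2/2 * (\<Sum>i\<in>UNIV. u$i * u$i)"
    by (simp add: sum_distrib_left power2_eq_square algebra_simps sum_divide_distrib)
  also have "exp (- (l^2)) * (2 ^ CARD('k) * exp (l^2/2 * (\<Sum>i\<in>UNIV. u$i * u$i))) = 2 ^ CARD('k) * exp (- (l^2) / 2)"
    by (simp add: uu exp_add[symmetric] algebra_simps)
  finally show ?thesis .
qed

lemma hoeff2:
  fixes u :: "real^'k"
  assumes nu: "norm u = 1" and l: "l \<ge> 0"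
  shows "real (card {x\<in>(signvecs :: (real^'k) set). (inner u x)^2 \<ge> l^2}) \<le> 2 * 2 ^ CARD('k) * exp (- (l^2) / 2)"
proof -
  have sub: "{x\<in>(signvecs :: (real^'k) set). (inner u x)^2 \<ge> l^2}
     \<subseteq> {x\<in>(signvecs :: (real^'k) set). inner u x \<ge> l} \<union> {x\<in>(signvecs :: (real^'k) set). inner (-u) x \<ge> l}"
  proof
    fix x assume "x \<in> {x\<in>(signvecs :: (real^'k) set). (inner u x)^2 \<ge> l^2}"
    then have "x \<in> signvecs" "\<bar>inner u x\<bar> \<ge> l" using l
      by (auto simp add: abs_le_square_iff[symmetric])
    then show "x \<in> {x\<in>(signvecs :: (real^'k) set). inner u x \<ge> l} \<union> {x\<in>(signvecs :: (real^'k) set). inner (-u) x \<ge> l}"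
      by (auto simp: abs_if inner_minus_left split: if_splits)
  qed
  have "real (card {x\<in>(signvecs :: (real^'k) set). (inner u x)^2 \<ge> l^2})
     \<le> real (card ({x\<in>(signvecs :: (real^'k) set). inner u x \<ge> l} \<union> {x\<in>(signvecs :: (real^'k) set). inner (-u) x \<ge> l}))"
    by (intro of_nat_mono card_mono[OF _ sub] finite_UnI) (simp_all add: finite_signvecs)
  also have "\<dots> \<le> real (card {x\<in>(signvecs :: (real^'k) set). inner u x \<ge> l}) + real (card {x\<in>(signvecs :: (real^'k) set). inner (-u) x \<ge> l})"
    by (simp only: of_nat_add[symmetric] of_nat_le_iff card_Un_le)
  also have "\<dots> \<le> 2 ^ CARD('k) * exp (- (l^2) / 2) + 2 ^ CARD('k) * exp (- (l^2) / 2)"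
    by (intro add_mono hoeff1) (use nu l in auto)
  finally show ?thesis by simp
qed




lemma gram:
  fixes Y :: "real^2^'k"
  assumes "Y \<in> Gset"
  shows "inner (column i Y) (column j Y) = (if i = j then 1 else 0)"
proof -
  have "(transpose Y ** Y) $ i $ j = mat 1 $ i $ j" using assms by (simp add: Gset_def)
  then show ?thesis
    by (simp add: matrix_matrix_mult_def transpose_def mat_def column_def inner_vec_def)
qed

lemma columns2: "columns (A :: real^2^'k) = {column 1 A, column 2 A}"
  by (auto simp: columns_def UNIV_2)

lemma span2:
  assumes "x \<in> span {a, b :: real^'k}"
  shows "\<exists>s t. x = s *\<^sub>R a + t *\<^sub>R b"
proof -
  from assms obtain k where "x - k *\<^sub>R a \<in> span {b}" by (auto simp: span_insert)
  then obtain t where "x - k *\<^sub>R a = t *\<^sub>R b" by (auto simp: span_singleton)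
  then have "x = k *\<^sub>R a + t *\<^sub>R b" by (simp add: algebra_simps)
  then show ?thesis by blast
qed

lemma proj_ineq:
  fixes B :: "(real^'k) set"
  assumes fB: "finite B" and oB: "pairwise orthogonal B" and nB: "\<And>u. u \<in> B \<Longrightarrow> norm u = 1"
    and z: "z \<in> span B"
  shows "(norm x)^2 - (norm (x - z))^2 \<le> (\<Sum>u\<in>B. (inner u x)^2)"
proof -
  define p where "p = (\<Sum>u\<in>B. inner u x *\<^sub>R u)"
  have ip: "inner v p = inner v x" if v: "v \<in> B" for v
  proof -
    have "inner v p = (\<Sum>u\<in>B. inner u x * inner v u)"
      by (simp add: p_def inner_sum_right)
    also have "\<dots> = inner v x * inner v v + (\<Sum>u\<in>B - {v}. inner u x * inner v u)"
      by (simp add: sum.remove[OF fB v])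
    also have "(\<Sum>u\<in>B - {v}. inner u x * inner v u) = 0"
      using oB v by (intro sum.neutral) (auto simp: pairwise_def orthogonal_def)
    also have "inner v v = 1" using nB[OF v] by (simp add: norm_eq_1)
    finally show ?thesis by (simp add: inner_commute)
  qed
  have orth: "orthogonal (x - p) w" if "w \<in> span B" for w
  proof (rule orthogonal_to_span[OF that])
    fix y assume y: "y \<in> B"
    show "orthogonal (x - p) y"
      unfolding orthogonal_def
      by (simp only: inner_diff_left inner_commute[of p y] inner_commute[of x y] ip[OF y])
  qed
  have pB: "p \<in> span B" unfolding p_def by (intro span_sum span_scale span_base)
  have "(norm (x - z))^2 = (norm ((x - p) + (p - z)))^2" by simp
  also have "\<dots> = (norm (x - p))^2 + (norm (p - z))^2"
    by (rule norm_add_Pythagorean, rule orth) (use pB z in \<open>simp add: span_diff\<close>)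
  finally have 1: "(norm (x - p))^2 \<le> (norm (x - z))^2" by simp
  have "(norm x)^2 = (norm ((x - p) + p))^2" by simp
  also have "\<dots> = (norm (x - p))^2 + (norm p)^2"
    by (rule norm_add_Pythagorean, rule orth[OF pB])
  finally have 2: "(norm x)^2 = (norm (x - p))^2 + (norm p)^2" .
  have "(norm p)^2 = (\<Sum>u\<in>B. (norm (inner u x *\<^sub>R u))^2)"
    unfolding p_def
    by (rule norm_sum_Pythagorean[OF fB], rule pairwise_ortho_scaleR) (use oB in \<open>auto simp: pairwise_def\<close>)
  also have "\<dots> = (\<Sum>u\<in>B. (inner u x)^2)"
    by (intro sum.cong refl) (simp add: nB power_mult_distrib)
  finally show ?thesis using 1 2 by linarith
qed

lemma geo:
  fixes Y C d :: "real^2^'k"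
  assumes Y: "Y \<in> Gset" and YC: "Y = C + e *\<^sub>R d" and d: "d \<in> Dset" and e: "e \<ge> 0"
    and x: "x \<in> colsp Y"
    and fB: "finite B" and oB: "pairwise orthogonal B" and nB: "\<And>u. u \<in> B \<Longrightarrow> norm u = 1"
    and sB: "span B = span (columns C)"
  shows "(norm x)^2 * (1 - 2*e^2) \<le> (\<Sum>u\<in>B. (inner u x)^2)"
proof -
  have "x \<in> span {column 1 Y, column 2 Y}" using x by (simp add: colsp_def columns2)
  then obtain s t where xst: "x = s *\<^sub>R column 1 Y + t *\<^sub>R column 2 Y" using span2 by blast
  have g11: "inner (column 1 Y) (column 1 Y) = 1" and g22: "inner (column 2 Y) (column 2 Y) = 1"
    and g12: "inner (column 1 Y) (column 2 Y) = 0" and g21: "inner (column 2 Y) (column 1 Y) = 0"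
    using gram[OF Y] by auto
  have nx: "(norm x)^2 = s^2 + t^2"
    unfolding power2_norm_eq_inner xst
    by (simp add: inner_add_left inner_add_right g11 g22 g12 g21 power2_eq_square)
  have colY: "column j Y = column j C + e *\<^sub>R column j d" for j
    by (simp add: YC column_def vec_eq_iff)
  define z where "z = s *\<^sub>R column 1 C + t *\<^sub>R column 2 C"
  have zB: "z \<in> span B" unfolding sB z_def columns2
    by (intro span_add span_scale span_base) auto
  have xz: "x - z = e *\<^sub>R (s *\<^sub>R column 1 d + t *\<^sub>R column 2 d)"
    by (simp add: xst z_def colY algebra_simps)
  have d1: "norm (column 1 d) \<le> 1" and d2: "norm (column 2 d) \<le> 1" using d by (auto simp: Dset_def)
  have "norm (s *\<^sub>R column 1 d + t *\<^sub>R column 2 d) \<le> norm (s *\<^sub>R column 1 d) + norm (t *\<^sub>R column 2 d)"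
    by (rule norm_triangle_ineq)
  also have "\<dots> \<le> \<bar>s\<bar> + \<bar>t\<bar>"
    using d1 d2 by (intro add_mono) (auto intro: mult_left_le)
  finally have n1: "norm (s *\<^sub>R column 1 d + t *\<^sub>R column 2 d) \<le> \<bar>s\<bar> + \<bar>t\<bar>" .
  have "norm (x - z) \<le> e * (\<bar>s\<bar> + \<bar>t\<bar>)"
    unfolding xz using n1 e by (simp add: mult_left_mono)
  then have "(norm (x - z))^2 \<le> (e * (\<bar>s\<bar> + \<bar>t\<bar>))^2"
    by (intro power_mono) auto
  also have "\<dots> \<le> 2 * e^2 * (s^2 + t^2)"
  proof -
    have "(\<bar>s\<bar> + \<bar>t\<bar>)^2 \<le> 2 * (s^2 + t^2)"
      using sum_squares_ge_zero[of "\<bar>s\<bar> - \<bar>t\<bar>"]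
      by (smt (verit) power2_abs power2_sum sum_power2_ge_zero zero_le_power2 power2_diff)
    note h = this
    have eq1: "(e * (\<bar>s\<bar> + \<bar>t\<bar>))^2 = e^2 * (\<bar>s\<bar> + \<bar>t\<bar>)^2" by (simp add: power_mult_distrib)
    have eq2: "2 * e^2 * (s^2 + t^2) = e^2 * (2 * (s^2 + t^2))" by simp
    show ?thesis unfolding eq1 eq2 by (rule mult_left_mono[OF h]) simp
  qed
  finally have "(norm (x - z))^2 \<le> 2 * e^2 * (norm x)^2" using nx by simp
  moreover have "(norm x)^2 - (norm (x - z))^2 \<le> (\<Sum>u\<in>B. (inner u x)^2)"
    by (rule proj_ineq[OF fB oB nB zB])
  ultimately show ?thesis by (simp add: algebra_simps)
qed




lemma gram_entry:
  fixes Y :: "real^2^'k"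
  shows "(transpose Y ** Y) $ i $ j = inner (column i Y) (column j Y)"
  by (simp add: matrix_matrix_mult_def transpose_def column_def inner_vec_def)

lemma rank2_frame:
  fixes A :: "real^'n^'m"
  assumes r: "rank A = 2"
  shows "\<exists>Y\<in>(Gset :: (real^2^'m) set). colsp Y = colsp A"
proof -
  have sub: "subspace (span (columns A))" by (rule subspace_span)
  obtain B where B: "B \<subseteq> span (columns A)" "pairwise orthogonal B"
      "\<And>x. x \<in> B \<Longrightarrow> norm x = 1" "independent B" "card B = dim (span (columns A))"
      "span B = span (columns A)"
    using orthonormal_basis_subspace[OF sub] by blast
  have "card B = 2" using B(5) r by (simp add: column_rank_def)
  then obtain u1 u2 where u: "B = {u1, u2}" "u1 \<noteq> u2" by (auto simp: card_2_iff)
  define Y :: "real^2^'m" where "Y = (\<chi> i j. if j = 1 then u1 $ i else u2 $ i)"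
  have c1: "column 1 Y = u1" and c2: "column 2 Y = u2"
    by (simp_all add: Y_def column_def vec_eq_iff)
  have n1: "inner u1 u1 = 1" "inner u2 u2 = 1" using B(3) u by (auto simp: norm_eq_1)
  have o12: "inner u1 u2 = 0" "inner u2 u1 = 0" using B(2) u
    by (auto simp: pairwise_def orthogonal_def)
  have "transpose Y ** Y = mat 1"
    by (simp add: vec_eq_iff forall_2 gram_entry c1 c2 n1 o12 mat_def)
  then have "Y \<in> Gset" by (simp add: Gset_def)
  moreover have "colsp Y = colsp A"
    unfolding colsp_def columns2 c1 c2 B(6)[symmetric] u ..
  ultimately show ?thesis by blast
qed

lemma norm_column_le: "norm (column j (M :: real^'n^'m)) \<le> norm M"
  unfolding norm_vec_def[of "column j M"] norm_vec_def[of M]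
  by (rule L2_set_mono) (simp_all add: column_def component_le_norm_cart)

lemma Gset_bounded:
  fixes Y :: "real^2^'k"
  assumes "Y \<in> Gset"
  shows "norm Y \<le> 2 * real CARD('k)"
proof -
  have cn: "norm (column j Y) = 1" for j
    using gram[OF assms, of j j] by (simp add: norm_eq_1)
  have "norm Y \<le> (\<Sum>i\<in>UNIV. norm (Y $ i))"
    unfolding norm_vec_def by (rule L2_set_le_sum) simp
  also have "\<dots> \<le> (\<Sum>i\<in>(UNIV::'k set). 2)"
  proof (rule sum_mono)
    fix i
    have "norm (Y $ i) \<le> (\<Sum>j\<in>UNIV. \<bar>Y $ i $ j\<bar>)" by (rule norm_le_l1_cart)
    also have "\<dots> \<le> (\<Sum>j\<in>(UNIV::2 set). 1)"
    proof (rule sum_mono)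
      fix j :: 2
      have "\<bar>column j Y $ i\<bar> \<le> norm (column j Y)" by (rule component_le_norm_cart)
      then show "\<bar>Y $ i $ j\<bar> \<le> 1" using cn by (simp add: column_def)
    qed
    finally show "norm (Y $ i) \<le> 2" by simp
  qed
  finally show ?thesis by simp
qed

lemma cover_exists:
  fixes G :: "(real^2^'k) set"
  assumes G: "G \<subseteq> Gset" and e: "e > 0"
  shows "\<exists>F. finite F \<and> G \<subseteq> (\<Union>c\<in>F. (\<lambda>d. c + d) ` ((*\<^sub>R) e ` Dset))"
proof -
  have "seq_compact (cball (0::real^2^'k) (2 * real CARD('k)))"
    by (intro compact_imp_seq_compact compact_cball)
  from seq_compact_imp_totally_bounded[OF this] e obtain K where
    K: "finite K" "cball (0::real^2^'k) (2 * real CARD('k)) \<subseteq> (\<Union>x\<in>K. ball x e)" by blast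
  have "G \<subseteq> (\<Union>c\<in>K. (\<lambda>d. c + d) ` ((*\<^sub>R) e ` Dset))"
  proof
    fix Y assume Y: "Y \<in> G"
    then have "Y \<in> cball 0 (2 * real CARD('k))" using Gset_bounded G by auto
    then obtain c where c: "c \<in> K" "dist c Y < e" using K by auto
    define d where "d = (1/e) *\<^sub>R (Y - c)"
    have "d \<in> Dset"
    proof -
      have "norm (column j d) \<le> 1" for j
      proof -
        have "norm (column j d) \<le> norm d" by (rule norm_column_le)
        also have "\<dots> = dist c Y / e" using e by (simp add: d_def dist_norm norm_minus_commute)
        also have "\<dots> \<le> 1" using c e by simp
        finally show ?thesis .
      qed
      then show ?thesis by (simp add: Dset_def)
    qed
    moreover have "Y = c + e *\<^sub>R d" using e by (simp add: d_def)
    ultimately show "Y \<in> (\<Union>c\<in>K. (\<lambda>d. c + d) ` ((*\<^sub>R) e ` Dset))" using c(1) by blast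
  qed
  then show ?thesis using K(1) by blast
qed

lemma covnum_props:
  fixes G :: "(real^2^'k) set"
  assumes G: "G \<subseteq> Gset" and e: "e > 0"
  shows "\<exists>F. finite F \<and> card F = covnum G ((*\<^sub>R) e ` Dset) \<and> G \<subseteq> (\<Union>c\<in>F. (\<lambda>d. c + d) ` ((*\<^sub>R) e ` Dset))"
proof -
  obtain F where "finite F" "G \<subseteq> (\<Union>c\<in>F. (\<lambda>d. c + d) ` ((*\<^sub>R) e ` Dset))"
    using cover_exists[OF G e] by blast
  then have ex: "\<exists>N. \<exists>F. finite F \<and> card F = N \<and> G \<subseteq> (\<Union>c\<in>F. (\<lambda>d. c + d) ` ((*\<^sub>R) e ` Dset))" by blast
  show ?thesis unfolding covnum_def by (rule LeastI_ex[OF ex])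
qed

lemma covnum_pos:
  fixes G :: "(real^2^'k) set"
  assumes G: "G \<subseteq> Gset" and e: "e > 0" and ne: "G \<noteq> {}"
  shows "covnum G ((*\<^sub>R) e ` Dset) \<ge> 1"
proof (rule ccontr)
  assume "\<not> ?thesis"
  then have "covnum G ((*\<^sub>R) e ` Dset) = 0" by simp
  with covnum_props[OF G e] obtain F where "finite F" "card F = 0" "G \<subseteq> (\<Union>c\<in>F. (\<lambda>d. c + d) ` ((*\<^sub>R) e ` Dset))"
    by metis
  then show False using ne by auto
qed




lemma onb_exists:
  fixes c :: "real^2^'k"
  shows "\<exists>B. finite B \<and> pairwise orthogonal B \<and> (\<forall>u\<in>B. norm u = 1) \<and> span B = span (columns c) \<and> card B \<le> 2"
proof -
  obtain B where B: "B \<subseteq> span (columns c)" "pairwise orthogonal B"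
      "\<And>x. x \<in> B \<Longrightarrow> norm x = 1" "independent B" "card B = dim (span (columns c))"
      "span B = span (columns c)"
    using orthonormal_basis_subspace[OF subspace_span] by blast
  have "dim (columns c) \<le> card (columns c)"
    by (rule dim_le_card) (auto simp: columns2 intro: span_base)
  also have "card (columns c) \<le> 2" unfolding columns2
    using card_Un_le[of "{column 2 c}" "{column 1 c}"] by (simp add: numeral_2_eq_2)
  finally have "card B \<le> 2" using B(5) by simp
  moreover have "finite B" using B(4) by (rule independent_imp_finite)
  ultimately show ?thesis using B by blast
qed

lemma norm_signvec:
  assumes "x \<in> (signvecs :: (real^'k) set)"
  shows "(norm x)^2 = real CARD('k)"
proof -
  have "(norm x)^2 = (\<Sum>i\<in>UNIV. x $ i * x $ i)" by (simp add: power2_norm_eq_inner inner_vec_def)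
  also have "\<dots> = (\<Sum>i\<in>(UNIV::'k set). 1)"
  proof (rule sum.cong[OF refl])
    fix i
    have "x $ i = 1 \<or> x $ i = -1" using assms by (simp add: signvecs_def)
    then show "x $ i * x $ i = 1" by auto
  qed
  finally show ?thesis by simp
qed

lemma bad_bound:
  fixes G :: "(real^2^'k) set"
  assumes G: "G \<subseteq> Gset" and e: "e > 0" and e2: "2 * e^2 < 1"
  shows "real (card {x\<in>(signvecs :: (real^'k) set). \<exists>Y\<in>G. x \<in> colsp Y})
     \<le> real (covnum G ((*\<^sub>R) e ` Dset)) * (4 * 2 ^ CARD('k) * exp (- (real CARD('k) * (1 - 2 * e^2)) / 4))"
proof -
  obtain F where F: "finite F" "card F = covnum G ((*\<^sub>R) e ` Dset)"
    "G \<subseteq> (\<Union>c\<in>F. (\<lambda>d. c + d) ` ((*\<^sub>R) e ` Dset))"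
    using covnum_props[OF G e] by blast
  have "\<forall>c :: real^2^'k. \<exists>B. finite B \<and> pairwise orthogonal B \<and> (\<forall>u\<in>B. norm u = 1)
      \<and> span B = span (columns c) \<and> card B \<le> 2"
    using onb_exists by blast
  from choice[OF this] obtain Bf where Bf': "\<forall>c :: real^2^'k. finite (Bf c) \<and> pairwise orthogonal (Bf c) \<and> (\<forall>u\<in>Bf c. norm u = 1)
      \<and> span (Bf c) = span (columns c) \<and> card (Bf c) \<le> 2" by blast
  have Bf: "\<And>c :: real^2^'k. finite (Bf c) \<and> pairwise orthogonal (Bf c) \<and> (\<forall>u\<in>Bf c. norm u = 1)
      \<and> span (Bf c) = span (columns c) \<and> card (Bf c) \<le> 2" using Bf' by blast
  define m where "m = real CARD('k)"
  define t where "t = 1 - 2 * e^2"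
  have mpos: "m > 0" by (simp add: m_def)
  have tpos: "t > 0" using e2 by (simp add: t_def)
  define L where "L = sqrt (m * t / 2)"
  have L0: "L \<ge> 0" using mpos tpos by (simp add: L_def)
  have L2: "L^2 = m * t / 2" using mpos tpos by (simp add: L_def)
  define Bad where "Bad c = (\<Union>u\<in>Bf c. {x\<in>(signvecs :: (real^'k) set). (inner u x)^2 \<ge> L^2})" for c
  have sub: "{x\<in>(signvecs :: (real^'k) set). \<exists>Y\<in>G. x \<in> colsp Y} \<subseteq> (\<Union>c\<in>F. Bad c)"
  proof
    fix x assume "x \<in> {x\<in>(signvecs :: (real^'k) set). \<exists>Y\<in>G. x \<in> colsp Y}"
    then obtain Y where x: "x \<in> signvecs" and Y: "Y \<in> G" and xY: "x \<in> colsp Y" by blast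
    from Y F(3) obtain c d where c: "c \<in> F" and d: "d \<in> Dset" and Ycd: "Y = c + e *\<^sub>R d" by blast
    have g: "(norm x)^2 * (1 - 2*e^2) \<le> (\<Sum>u\<in>Bf c. (inner u x)^2)"
      using Bf[of c] G Y e by (intro geo[OF _ Ycd d _ xY]) auto
    have "\<exists>u\<in>Bf c. (inner u x)^2 \<ge> L^2"
    proof (rule ccontr)
      assume "\<not> ?thesis"
      then have lt: "\<And>u. u \<in> Bf c \<Longrightarrow> (inner u x)^2 < L^2" by auto
      have "(\<Sum>u\<in>Bf c. (inner u x)^2) < m * t"
      proof (cases "Bf c = {}")
        case True then show ?thesis using mpos tpos by simp
      next
        case False
        have "(\<Sum>u\<in>Bf c. (inner u x)^2) < (\<Sum>u\<in>Bf c. L^2)"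
          using Bf[of c] False lt by (intro sum_strict_mono) auto
        also have "\<dots> = real (card (Bf c)) * L^2" by simp
        also have "\<dots> \<le> 2 * L^2" using Bf[of c] L0 by (intro mult_right_mono) auto
        finally show ?thesis using L2 by simp
      qed
      moreover have "(norm x)^2 * (1 - 2*e^2) = m * t" using norm_signvec[OF x] by (simp add: m_def t_def)
      ultimately show False using g by simp
    qed
    then show "x \<in> (\<Union>c\<in>F. Bad c)" using c x by (auto simp: Bad_def)
  qed
  have bound_c: "real (card (Bad c)) \<le> 4 * 2 ^ CARD('k) * exp (- (m * t) / 4)" for c
  proof -
    have "real (card (Bad c)) \<le> real (\<Sum>u\<in>Bf c. card {x\<in>(signvecs :: (real^'k) set). (inner u x)^2 \<ge> L^2})"
      unfolding Bad_def using Bf[of c] by (intro of_nat_mono card_UN_le) auto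
    also have "\<dots> = (\<Sum>u\<in>Bf c. real (card {x\<in>(signvecs :: (real^'k) set). (inner u x)^2 \<ge> L^2}))" by simp
    also have "\<dots> \<le> (\<Sum>u\<in>Bf c. 2 * 2 ^ CARD('k) * exp (- (L^2) / 2))"
      using Bf[of c] L0 by (intro sum_mono hoeff2) auto
    also have "\<dots> = real (card (Bf c)) * (2 * 2 ^ CARD('k) * exp (- (L^2) / 2))" by simp
    also have "\<dots> \<le> 2 * (2 * 2 ^ CARD('k) * exp (- (L^2) / 2))"
      using Bf[of c] by (intro mult_right_mono) auto
    also have "- (L^2) / 2 = - (m * t) / 4" using L2 by simp
    finally show ?thesis by simp
  qed
  have "real (card {x\<in>(signvecs :: (real^'k) set). \<exists>Y\<in>G. x \<in> colsp Y}) \<le> real (card (\<Union>c\<in>F. Bad c))"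
  proof -
    have fU: "finite (\<Union>c\<in>F. Bad c)" by (rule finite_subset[OF _ finite_signvecs]) (auto simp: Bad_def)
    show ?thesis by (intro of_nat_mono card_mono[OF fU sub])
  qed
  also have "\<dots> \<le> real (\<Sum>c\<in>F. card (Bad c))" by (intro of_nat_mono card_UN_le F(1))
  also have "\<dots> = (\<Sum>c\<in>F. real (card (Bad c)))" by simp
  also have "\<dots> \<le> (\<Sum>c\<in>F. 4 * 2 ^ CARD('k) * exp (- (m * t) / 4))" by (intro sum_mono bound_c)
  also have "\<dots> = real (covnum G ((*\<^sub>R) e ` Dset)) * (4 * 2 ^ CARD('k) * exp (- (m * t) / 4))"
    using F(2) by simp
  finally show ?thesis by (simp add: m_def t_def)
qed




theorem theorem4:
  fixes S :: "real^'m \<Rightarrow> real^'n \<Rightarrow> real^'q"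
    and \<epsilon> \<delta>' \<delta> :: real
  assumes bil: "bilinear S"
    and inj1: "Nset S 1 \<inter> Mset = {0}"
    and nonempty: "Nset S 2 \<inter> Mset - {0} \<noteq> {}"
    and eps: "0 < \<epsilon>" "\<epsilon> < 1"
    and dp: "0 < \<delta>'" "\<delta>' < 1 - 2 * \<epsilon>^2"
    and d_def: "\<delta> = 1 - (sqrt (1 - \<delta>') - sqrt 2 * \<epsilon>)^2"
  shows "measure_pmf.prob (pmf_of_set (signvecs \<times> signvecs))
           {(x, y). \<forall>X \<in> Nset S 2 \<inter> Mset - {0}. x \<notin> colsp X \<or> y \<notin> rowsp X}
         > 1 - 16 * real (covnum (Gc S) ((*\<^sub>R) \<epsilon> ` Dset) * covnum (Gr S) ((*\<^sub>R) \<epsilon> ` Dset))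
               * exp (- (real CARD('m) + real CARD('n)) * (1 - \<delta>) / 4)"
proof -
  define NS where "NS = Nset S 2 \<inter> Mset - {0}"
  have rank2: "rank X = 2" if X: "X \<in> NS" for X
  proof -
    have le2: "rank X \<le> 2" using X by (simp add: NS_def Nset_def)
    have "\<not> rank X \<le> 1"
    proof
      assume "rank X \<le> 1"
      then have "X \<in> Nset S 1 \<inter> Mset" using X by (simp add: NS_def Nset_def)
      then show False using inj1 X by (auto simp: NS_def)
    qed
    then show ?thesis using le2 by simp
  qed
  have colfr: "\<exists>Y\<in>Gc S. colsp Y = colsp X" if X: "X \<in> NS" for X
  proof -
    obtain Y where "Y \<in> Gset" "colsp Y = colsp X" using rank2_frame[OF rank2[OF X]] by blast
    then show ?thesis using X by (auto simp: Gc_def NS_def)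
  qed
  have rowfr: "\<exists>Y\<in>Gr S. colsp Y = rowsp X" if X: "X \<in> NS" for X
  proof -
    have "rank (transpose X) = 2" using rank2[OF X] by (simp add: rank_transpose)
    then obtain Y where "Y \<in> Gset" "colsp Y = colsp (transpose X)" using rank2_frame by blast
    moreover have "colsp (transpose X) = rowsp X" by (simp add: colsp_def rowsp_def columns_transpose)
    ultimately show ?thesis using X by (auto simp: Gr_def NS_def)
  qed
  have e: "\<epsilon> > 0" using eps by simp
  have e2: "2 * \<epsilon>^2 < 1" using dp by simp
  have GcG: "Gc S \<subseteq> Gset" by (auto simp: Gc_def)
  have GrG: "Gr S \<subseteq> Gset" by (auto simp: Gr_def)
  obtain X0 where X0: "X0 \<in> NS" using nonempty by (auto simp: NS_def)
  have Gcne: "Gc S \<noteq> {}" using colfr[OF X0] by auto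
  have Grne: "Gr S \<noteq> {}" using rowfr[OF X0] by auto
  define Nc where "Nc = real (covnum (Gc S) ((*\<^sub>R) \<epsilon> ` Dset))"
  define Nr where "Nr = real (covnum (Gr S) ((*\<^sub>R) \<epsilon> ` Dset))"
  have Nc1: "Nc \<ge> 1" unfolding Nc_def using covnum_pos[OF GcG e Gcne] by simp
  have Nr1: "Nr \<ge> 1" unfolding Nr_def using covnum_pos[OF GrG e Grne] by simp
  define m where "m = real CARD('m)"
  define n where "n = real CARD('n)"
  define t where "t = 1 - 2 * \<epsilon>^2"
  define Bc where "Bc = {x\<in>(signvecs :: (real^'m) set). \<exists>Y\<in>Gc S. x \<in> colsp Y}"
  define Br where "Br = {y\<in>(signvecs :: (real^'n) set). \<exists>Y\<in>Gr S. y \<in> colsp Y}"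
  have cBc: "real (card Bc) \<le> Nc * (4 * 2 ^ CARD('m) * exp (- (m * t) / 4))"
    unfolding Bc_def Nc_def m_def t_def by (rule bad_bound[OF GcG e e2])
  have cBr: "real (card Br) \<le> Nr * (4 * 2 ^ CARD('n) * exp (- (n * t) / 4))"
    unfolding Br_def Nr_def n_def t_def by (rule bad_bound[OF GrG e e2])
  define Good where "Good = {(x :: real^'m, y :: real^'n). \<forall>X \<in> Nset S 2 \<inter> Mset - {0}. x \<notin> colsp X \<or> y \<notin> rowsp X}"
  define SS where "SS = (signvecs :: (real^'m) set) \<times> (signvecs :: (real^'n) set)"
  have fSS: "finite SS" by (simp add: SS_def finite_signvecs)
  have cSS: "real (card SS) = 2 ^ CARD('m) * 2 ^ CARD('n)"
    by (simp add: SS_def card_cartesian_product card_signvecs)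
  have SSne: "SS \<noteq> {}" using cSS by auto
  have badsub: "SS - Good \<subseteq> Bc \<times> Br"
  proof
    fix p assume p: "p \<in> SS - Good"
    obtain x y where pxy: "p = (x, y)" by (cases p)
    from p pxy obtain X where X: "X \<in> NS" "x \<in> colsp X" "y \<in> rowsp X"
      by (auto simp: Good_def NS_def)
    have "x \<in> Bc" using colfr[OF X(1)] X(2) p pxy by (auto simp: Bc_def SS_def)
    moreover have "y \<in> Br" using rowfr[OF X(1)] X(3) p pxy by (auto simp: Br_def SS_def)
    ultimately show "p \<in> Bc \<times> Br" using pxy by simp
  qed
  have fB: "finite (Bc \<times> Br)" by (auto simp: Bc_def Br_def finite_signvecs)
  have "real (card (SS - Good)) \<le> real (card (Bc \<times> Br))"
    by (intro of_nat_mono card_mono[OF fB badsub])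
  also have "\<dots> = real (card Bc) * real (card Br)" by (simp add: card_cartesian_product)
  finally have cbad: "real (card (SS - Good)) \<le> real (card Bc) * real (card Br)" .
  have "SS \<inter> Good = SS - (SS - Good)" by auto
  then have "card (SS \<inter> Good) = card SS - card (SS - Good)"
    using fSS by (simp add: card_Diff_subset)
  then have cgood: "real (card (SS \<inter> Good)) = real (card SS) - real (card (SS - Good))"
    by (simp add: of_nat_diff card_mono fSS)
  have prob: "measure_pmf.prob (pmf_of_set SS) Good = real (card (SS \<inter> Good)) / real (card SS)"
    by (rule measure_pmf_of_set[OF SSne fSS])
  have pos2: "(2::real) ^ CARD('m) > 0" "(2::real) ^ CARD('n) > 0" by auto
  have a: "real (card Bc) / 2 ^ CARD('m) \<le> 4 * Nc * exp (- (m * t) / 4)"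
    using cBc pos2 by (simp add: divide_le_eq mult_ac)
  have b: "real (card Br) / 2 ^ CARD('n) \<le> 4 * Nr * exp (- (n * t) / 4)"
    using cBr pos2 by (simp add: divide_le_eq mult_ac)
  have "real (card Bc) / 2 ^ CARD('m) * (real (card Br) / 2 ^ CARD('n))
      \<le> (4 * Nc * exp (- (m * t) / 4)) * (4 * Nr * exp (- (n * t) / 4))"
    by (intro mult_mono a b) (use Nc1 in auto)
  also have "\<dots> = 16 * (Nc * Nr) * exp (- (m + n) * t / 4)"
  proof -
    have "- (m * t) / 4 + - (n * t) / 4 = - (m + n) * t / 4" by (simp add: field_simps)
    then have "exp (- (m * t) / 4) * exp (- (n * t) / 4) = exp (- (m + n) * t / 4)" by (simp add: exp_add[symmetric])
    then show ?thesis by (simp add: mult_ac)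
  qed
  finally have ab: "real (card Bc) / 2 ^ CARD('m) * (real (card Br) / 2 ^ CARD('n)) \<le> 16 * (Nc * Nr) * exp (- (m + n) * t / 4)" .
  have pge: "measure_pmf.prob (pmf_of_set SS) Good \<ge> 1 - 16 * (Nc * Nr) * exp (- (m + n) * t / 4)"
  proof -
    have "measure_pmf.prob (pmf_of_set SS) Good = 1 - real (card (SS - Good)) / real (card SS)"
      unfolding prob cgood using SSne fSS by (simp add: diff_divide_distrib)
    moreover have "real (card (SS - Good)) / real (card SS) \<le> real (card Bc) / 2 ^ CARD('m) * (real (card Br) / 2 ^ CARD('n))"
      unfolding cSS using cbad pos2 by (simp add: divide_right_mono)
    ultimately show ?thesis using ab by linarith
  qed
  \<comment> \<open>compare exponents\<close>
  have td: "1 - \<delta> < t"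
  proof -
    define a where "a = sqrt (1 - \<delta>')"
    define b where "b = sqrt 2 * \<epsilon>"
    have b0: "b > 0" using e by (simp add: b_def)
    have b2: "b^2 = 2 * \<epsilon>^2" by (simp add: b_def power_mult_distrib)
    have a1: "a < 1" using dp by (simp add: a_def)
    have d1: "\<delta>' < 1" using dp(2) zero_le_power2[of \<epsilon>] by linarith
    have a2: "a^2 = 1 - \<delta>'" using d1 by (simp add: a_def)
    have "b^2 < a^2" using b2 a2 dp by simp
    moreover have a0: "a \<ge> 0" using d1 by (simp add: a_def)
    ultimately have ab: "b < a" by (rule power2_less_imp_less)
    have "(a - b)^2 < (1 - b)^2" using ab a1 by (intro power_strict_mono) auto
    also have "(1 - b)^2 \<le> 1 - b^2"
    proof -
      have "b \<le> 1" using ab a1 by simp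
      then have "b^2 \<le> b" using b0 by (simp add: power2_eq_square mult_le_cancel_left1)
      then show ?thesis by (simp add: power2_diff)
    qed
    finally show ?thesis unfolding d_def t_def a_def[symmetric] b_def[symmetric] b2 by simp
  qed
  have m0: "m > 0" by (simp add: m_def)
  have n0: "n > 0" by (simp add: n_def)
  have mn: "m + n > 0" using m0 n0 by simp
  have "exp (- (m + n) * t / 4) < exp (- (m + n) * (1 - \<delta>) / 4)"
  proof -
    have "(m + n) * (1 - \<delta>) < (m + n) * t" by (rule mult_strict_left_mono[OF td mn])
    then have "- (m + n) * t / 4 < - (m + n) * (1 - \<delta>) / 4" unfolding mult_minus_left by linarith
    then show ?thesis by simp
  qed
  then have "16 * (Nc * Nr) * exp (- (m + n) * t / 4) < 16 * (Nc * Nr) * exp (- (m + n) * (1 - \<delta>) / 4)"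
    using Nc1 Nr1 by (intro mult_strict_left_mono) auto
  then have "1 - 16 * (Nc * Nr) * exp (- (m + n) * (1 - \<delta>) / 4) < 1 - 16 * (Nc * Nr) * exp (- (m + n) * t / 4)"
    by (rule diff_strict_left_mono)
  then have fin: "measure_pmf.prob (pmf_of_set SS) Good > 1 - 16 * (Nc * Nr) * exp (- (m + n) * (1 - \<delta>) / 4)"
    using pge by (rule less_le_trans)
  have eq: "real (covnum (Gc S) ((*\<^sub>R) \<epsilon> ` Dset) * covnum (Gr S) ((*\<^sub>R) \<epsilon> ` Dset)) = Nc * Nr"
    by (simp add: Nc_def Nr_def)
  have g1: "measure_pmf.prob (pmf_of_set SS) Good = measure_pmf.prob (pmf_of_set (signvecs \<times> signvecs))
           {(x, y). \<forall>X \<in> Nset S 2 \<inter> Mset - {0}. x \<notin> colsp X \<or> y \<notin> rowsp X}"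
    by (simp only: SS_def Good_def)
  have g2: "16 * (Nc * Nr) * exp (- (m + n) * (1 - \<delta>) / 4) = 16 * real (covnum (Gc S) ((*\<^sub>R) \<epsilon> ` Dset) * covnum (Gr S) ((*\<^sub>R) \<epsilon> ` Dset))
               * exp (- (real CARD('m) + real CARD('n)) * (1 - \<delta>) / 4)"
    by (simp only: Nc_def Nr_def m_def n_def of_nat_mult)
  show ?thesis using fin unfolding g1 g2 .
qed


end
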